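(* Let $\mathcal{A}$ be a deterministic adaptive algorithm that is $(\alpha,\beta)$-instance optimal on graphs with $n$ vertices for parameter $k$. Then $\alpha^2\beta=\Omega(n/k)$.
   Context: Graphs are undirected with known edge weights and unique shortest paths; edges have distinct capacities unknown to the algorithm. For vertices $s,t$, $P(s,t)$ is the unique shortest path; an edge on $P(s,t)$ is a bottleneck edge of $P(s,t)$ if its capacity is strictly smaller than that of every other edge of $P(s,t)$. Selecting $s$ as a vantage point reveals the bottleneck edge of $P(s,t)$ and its capacity for every $t\neq s$; a set of vantage points reveals the union. An adaptive algorithm selects vantage points one at a time, learning the edges revealed by each selection before choosing the next. For an instance $I=(G,c)$, $OPT(I)$ is the maximum number of edges revealed by any set of $k$ vertices. An algorithm is $(\alpha,\beta)$-instance optimal ($\alpha,\beta\ge1$) if on every instance $I$ it selects at most $\alpha k$ vantage points and reveals at least $OPT(I)/\beta$ edges. *)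

theory Defs
  imports Complex_Main
begin

text \<open>Vertices of an n-vertex graph are 0,...,n-1; an undirected edge is a
2-element vertex set. Weights w and capacities c are functions on edges.\<close>

type_synonym edge = "nat set"

definition is_path :: "edge set \<Rightarrow> nat \<Rightarrow> nat \<Rightarrow> nat list \<Rightarrow> bool" where
  "is_path E s t p \<longleftrightarrow> p \<noteq> [] \<and> hd p = s \<and> last p = t \<and> distinct p \<and>
     (\<forall>i < length p - 1. {p ! i, p ! Suc i} \<in> E)"

definition path_edges :: "nat list \<Rightarrow> edge set" where
  "path_edges p = {{p ! i, p ! Suc i} | i. i < length p - 1}"

definition path_weight :: "(edge \<Rightarrow> real) \<Rightarrow> nat list \<Rightarrow> real" where
  "path_weight w p = (\<Sum>i < length p - 1. w {p ! i, p ! Suc i})"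

definition is_shortest_path :: "edge set \<Rightarrow> (edge \<Rightarrow> real) \<Rightarrow> nat \<Rightarrow> nat \<Rightarrow> nat list \<Rightarrow> bool" where
  "is_shortest_path E w s t p \<longleftrightarrow> is_path E s t p \<and>
     (\<forall>q. is_path E s t q \<longrightarrow> path_weight w p \<le> path_weight w q)"

definition valid_instance :: "nat \<Rightarrow> edge set \<Rightarrow> (edge \<Rightarrow> real) \<Rightarrow> (edge \<Rightarrow> real) \<Rightarrow> bool" where
  "valid_instance n E w c \<longleftrightarrow>
     (\<forall>e\<in>E. e \<subseteq> {..<n} \<and> card e = 2) \<and>
     (\<forall>e\<in>E. w e > 0) \<and>
     inj_on c E \<and>
     (\<forall>s<n. \<forall>t<n. \<exists>!p. is_shortest_path E w s t p)"

definition SP :: "edge set \<Rightarrow> (edge \<Rightarrow> real) \<Rightarrow> nat \<Rightarrow> nat \<Rightarrow> nat list" where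
  "SP E w s t = (THE p. is_shortest_path E w s t p)"

definition bottleneck :: "edge set \<Rightarrow> (edge \<Rightarrow> real) \<Rightarrow> (edge \<Rightarrow> real) \<Rightarrow> nat \<Rightarrow> nat \<Rightarrow> edge" where
  "bottleneck E w c s t = (THE e. e \<in> path_edges (SP E w s t) \<and>
      (\<forall>e' \<in> path_edges (SP E w s t). e' \<noteq> e \<longrightarrow> c e < c e'))"

definition revealed_by :: "nat \<Rightarrow> edge set \<Rightarrow> (edge \<Rightarrow> real) \<Rightarrow> (edge \<Rightarrow> real) \<Rightarrow> nat \<Rightarrow> edge set" where
  "revealed_by n E w c s = (if s < n then {bottleneck E w c s t | t. t < n \<and> t \<noteq> s} else {})"

definition revealed :: "nat \<Rightarrow> edge set \<Rightarrow> (edge \<Rightarrow> real) \<Rightarrow> (edge \<Rightarrow> real) \<Rightarrow> nat set \<Rightarrow> edge set" where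
  "revealed n E w c S = (\<Union>s\<in>S. revealed_by n E w c s)"

definition OPT :: "nat \<Rightarrow> edge set \<Rightarrow> (edge \<Rightarrow> real) \<Rightarrow> (edge \<Rightarrow> real) \<Rightarrow> nat \<Rightarrow> nat" where
  "OPT n E w c k = Max ((\<lambda>S. card (revealed n E w c S)) ` {S. S \<subseteq> {..<n} \<and> card S \<le> k})"

type_synonym observation = "nat \<Rightarrow> (edge \<times> real) option"

definition observe :: "nat \<Rightarrow> edge set \<Rightarrow> (edge \<Rightarrow> real) \<Rightarrow> (edge \<Rightarrow> real) \<Rightarrow> nat \<Rightarrow> observation" where
  "observe n E w c s = (\<lambda>t. if s < n \<and> t < n \<and> t \<noteq> s
       then Some (bottleneck E w c s t, c (bottleneck E w c s t)) else None)"

type_synonym history = "(nat \<times> observation) list"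

text \<open>A deterministic adaptive algorithm: given the known data (n, edges, weights) and
the history of previous selections with their observations, it either selects the next
vantage point (Some v) or stops (None). It does not know the capacities.\<close>
type_synonym algorithm = "nat \<Rightarrow> edge set \<Rightarrow> (edge \<Rightarrow> real) \<Rightarrow> history \<Rightarrow> nat option"

primrec run :: "algorithm \<Rightarrow> nat \<Rightarrow> edge set \<Rightarrow> (edge \<Rightarrow> real) \<Rightarrow> (edge \<Rightarrow> real) \<Rightarrow> nat \<Rightarrow> history" where
  "run A n E w c 0 = []"
| "run A n E w c (Suc i) = (case A n E w (run A n E w c i) of
       None \<Rightarrow> run A n E w c i
     | Some v \<Rightarrow> run A n E w c i @ [(v, observe n E w c v)])"

definition selected :: "algorithm \<Rightarrow> nat \<Rightarrow> edge set \<Rightarrow> (edge \<Rightarrow> real) \<Rightarrow> (edge \<Rightarrow> real) \<Rightarrow> nat set" where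
  "selected A n E w c = (\<Union>i. fst ` set (run A n E w c i))"

definition instance_optimal :: "algorithm \<Rightarrow> nat \<Rightarrow> nat \<Rightarrow> real \<Rightarrow> real \<Rightarrow> bool" where
  "instance_optimal A n k \<alpha> \<beta> \<longleftrightarrow> \<alpha> \<ge> 1 \<and> \<beta> \<ge> 1 \<and>
     (\<forall>E w c. valid_instance n E w c \<longrightarrow>
        (\<forall>i. real (length (run A n E w c i)) \<le> \<alpha> * real k) \<and>
        real (card (revealed n E w c (selected A n E w c))) \<ge> real (OPT n E w c k) / \<beta>)"

end

theory Submission
  imports Defs
begin

definition pathE :: "nat \<Rightarrow> edge set" where
  "pathE n = {{j, Suc j} | j. Suc j < n}"

definition mp :: "nat \<Rightarrow> nat \<Rightarrow> nat list" where
  "mp s t = (if s \<le> t then [s..<Suc t] else rev [t..<Suc s])"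

lemma mp_same: "mp s s = [s]" by (simp add: mp_def)

lemma mp_up: "s < t \<Longrightarrow> mp s t = s # mp (Suc s) t"
  by (simp add: mp_def upt_conv_Cons del: upt_Suc)

lemma mp_down: "t < s \<Longrightarrow> mp s t = s # mp (s - 1) t"
proof -
  assume "t < s"
  then obtain s' where s': "s = Suc s'" by (cases s) auto
  show ?thesis using \<open>t < s\<close> by (simp add: mp_def s')
qed

lemma set_mp: "set (mp s t) = {min s t..max s t}"
  by (auto simp: mp_def)

lemma is_path_Cons:
  "is_path E s t (x # p) \<longleftrightarrow> x = s \<and> ((p = [] \<and> s = t) \<or>
     (p \<noteq> [] \<and> {s, hd p} \<in> E \<and> s \<notin> set p \<and> is_path E (hd p) t p))"
proof (cases p)
  case Nil
  then show ?thesis by (auto simp: is_path_def)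
next
  case (Cons y q)
  have e: "(\<forall>i < length (x # p) - 1. {(x#p) ! i, (x#p) ! Suc i} \<in> E) \<longleftrightarrow>
        {x, y} \<in> E \<and> (\<forall>i < length p - 1. {p ! i, p ! Suc i} \<in> E)"
    using Cons
    apply (auto simp: less_Suc_eq_0_disj)
    done
  show ?thesis using Cons e by (auto simp: is_path_def)
qed

lemma pathE_mem: "{a, b} \<in> pathE n \<longleftrightarrow> (b = Suc a \<or> a = Suc b) \<and> max a b < n"
  unfolding pathE_def
  apply (auto simp: doubleton_eq_iff)
  done

lemma is_path_mp: "s < n \<Longrightarrow> t < n \<Longrightarrow> is_path (pathE n) s t (mp s t)"
proof (induction "if s \<le> t then t - s else s - t" arbitrary: s)
  case 0
  then have "s = t" by (auto split: if_splits)
  then show ?case by (simp add: mp_same is_path_def)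
next
  case (Suc d)
  show ?case
  proof (cases "s < t")
    case True
    have ih: "is_path (pathE n) (Suc s) t (mp (Suc s) t)"
      using Suc True by auto
    have "Suc s \<le> t" using True by simp
    then have hd: "hd (mp (Suc s) t) = Suc s" by (simp add: mp_def upt_conv_Cons del: upt_Suc)
    have e: "{s, Suc s} \<in> pathE n" using True Suc.prems by (simp add: pathE_mem)
    have ns: "s \<notin> set (mp (Suc s) t)" using True by (simp add: set_mp)
    have ne: "mp (Suc s) t \<noteq> []" by (simp add: mp_def)
    show ?thesis unfolding mp_up[OF True] is_path_Cons using e ns ne hd ih by simp
  next
    case False
    then have ts: "t < s" using Suc by (auto split: if_splits)
    have "d = (if s - 1 \<le> t then t - (s - 1) else s - 1 - t)" using Suc.hyps(2) ts by auto
    then have ih: "is_path (pathE n) (s - 1) t (mp (s - 1) t)"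
      using Suc.hyps(1)[of "s - 1"] Suc.prems by auto
    have hd: "hd (mp (s - 1) t) = s - 1" using ts by (cases s) (auto simp: mp_def)
    have e: "{s, s - 1} \<in> pathE n" using ts Suc.prems by (simp add: pathE_mem)
    have ns: "s \<notin> set (mp (s - 1) t)" using ts by (simp add: set_mp)
    have ne: "mp (s - 1) t \<noteq> []" using ts by (simp add: mp_def)
    show ?thesis unfolding mp_down[OF ts] is_path_Cons using e ns ne hd ih by simp
  qed
qed

lemma is_path_unique: "is_path (pathE n) s t p \<Longrightarrow> p = mp s t"
proof (induction p arbitrary: s)
  case Nil
  then show ?case by (simp add: is_path_def)
next
  case (Cons x p)
  show ?case
  proof (cases "p = []")
    case True
    then show ?thesis using Cons.prems by (simp add: is_path_Cons mp_same)
  next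
    case False
    from Cons.prems False have x: "x = s" and e: "{s, hd p} \<in> pathE n"
      and ns: "s \<notin> set p" and pp: "is_path (pathE n) (hd p) t p"
      by (auto simp: is_path_Cons)
    have ih: "p = mp (hd p) t" using Cons.IH pp by blast
    from e have "hd p = Suc s \<or> s = Suc (hd p)" by (simp add: pathE_mem)
    then show ?thesis
    proof
      assume h: "hd p = Suc s"
      show ?thesis
      proof (cases "s < t")
        case True then show ?thesis using ih h x by (simp add: mp_up)
      next
        case False
        then have "s \<in> set (mp (Suc s) t)" by (simp add: set_mp)
        then show ?thesis using ns ih h by simp
      qed
    next
      assume h: "s = Suc (hd p)"
      show ?thesis
      proof (cases "t < s")
        case True then show ?thesis using ih h x by (simp add: mp_down)
      next
        case False
        then have "s \<in> set (mp (hd p) t)" using h by (simp add: set_mp)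
        then show ?thesis using ns ih h by simp
      qed
    qed
  qed
qed

definition touch :: "nat list \<Rightarrow> edge \<Rightarrow> bool" where
  "touch F e = (\<exists>x\<in>set F. x \<in> e)"

definition key :: "nat \<Rightarrow> nat list \<Rightarrow> edge \<Rightarrow> nat" where
  "key n F e = length (takeWhile (\<lambda>x. x \<notin> e) F) * (n + 1) + Min e"

definition cap :: "nat \<Rightarrow> nat list \<Rightarrow> edge \<Rightarrow> real" where
  "cap n F e = (if touch F e then - 1 / (real (key n F e) + 1) else 1 / (real (Min e) + 1))"

lemma Min_edge[simp]: "Min {j, Suc j} = j"
  by (simp add: min_def)

lemma pathE_elem: "e \<in> pathE n \<Longrightarrow> \<exists>j. e = {j, Suc j} \<and> Suc j < n"
  by (auto simp: pathE_def)

lemma cap_neg: "touch F e \<Longrightarrow> cap n F e < 0"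
  by (simp add: cap_def)

lemma cap_pos: "\<not> touch F e \<Longrightarrow> cap n F e > 0"
  by (simp add: cap_def)

lemma key_inj:
  assumes "a * (n + 1) + j = b * (n + 1) + (j'::nat)" "j < n" "j' < n"
  shows "j = j'"
proof -
  have "(a * (n + 1) + j) mod (n + 1) = j mod (n + 1)" by (rule mod_mult_self3)
  also have "\<dots> = j" using assms(2) by simp
  finally have 1: "(a * (n + 1) + j) mod (n + 1) = j" .
  have "(b * (n + 1) + j') mod (n + 1) = j' mod (n + 1)" by (rule mod_mult_self3)
  also have "\<dots> = j'" using assms(3) by simp
  finally have 2: "(b * (n + 1) + j') mod (n + 1) = j'" .
  show ?thesis using 1 2 assms(1) by simp
qed

lemma inj_cap: "inj_on (cap n F) (pathE n)"
proof (rule inj_onI)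
  fix e e' assume e: "e \<in> pathE n" and e': "e' \<in> pathE n" and eq: "cap n F e = cap n F e'"
  obtain j where j: "e = {j, Suc j}" "Suc j < n" using pathE_elem[OF e] by blast
  obtain j' where j': "e' = {j', Suc j'}" "Suc j' < n" using pathE_elem[OF e'] by blast
  show "e = e'"
  proof (cases "touch F e")
    case True
    have t': "touch F e'"
    proof (rule ccontr)
      assume "\<not> touch F e'"
      then have "cap n F e' > 0" by (rule cap_pos)
      moreover have "cap n F e < 0" using True by (rule cap_neg)
      ultimately show False using eq by simp
    qed
    from eq True t' have "- 1 / (real (key n F e) + 1) = - 1 / (real (key n F e') + 1)"
      by (simp add: cap_def)
    then have "real (key n F e) = real (key n F e')" by simp
    then have "key n F e = key n F e'" by simp
    then have "length (takeWhile (\<lambda>x. x \<notin> e) F) * (n + 1) + j = length (takeWhile (\<lambda>x. x \<notin> e') F) * (n + 1) + j'"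
      using j j' by (simp add: key_def)
    moreover have "j < n" "j' < n" using j j' by auto
    ultimately have "j = j'" by (rule key_inj)
    then show ?thesis using j j' by simp
  next
    case False
    have t': "\<not> touch F e'"
    proof
      assume "touch F e'"
      then have "cap n F e' < 0" by (rule cap_neg)
      moreover have "cap n F e > 0" using False by (rule cap_pos)
      ultimately show False using eq by simp
    qed
    from eq False t' have "1 / (real j + 1) = 1 / (real j' + 1)" using j j'
      by (simp add: cap_def)
    then have "real j = real j'" by simp
    then show ?thesis using j j' by simp
  qed
qed

lemma SP_props:
  assumes "s < n" "t < n"
  shows "SP (pathE n) w s t = mp s t" "is_shortest_path (pathE n) w s t (mp s t)"
proof -
  have ip: "is_path (pathE n) s t (mp s t)" by (rule is_path_mp[OF assms])
  have "\<forall>q. is_path (pathE n) s t q \<longrightarrow> path_weight w (mp s t) \<le> path_weight w q"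
  proof (intro allI impI)
    fix q assume "is_path (pathE n) s t q"
    then have "q = mp s t" by (rule is_path_unique)
    then show "path_weight w (mp s t) \<le> path_weight w q" by simp
  qed
  then have sp: "is_shortest_path (pathE n) w s t (mp s t)"
    using ip unfolding is_shortest_path_def by blast
  have u: "\<And>p. is_shortest_path (pathE n) w s t p \<Longrightarrow> p = mp s t"
  proof -
    fix p assume "is_shortest_path (pathE n) w s t p"
    then have "is_path (pathE n) s t p" unfolding is_shortest_path_def by simp
    then show "p = mp s t" by (rule is_path_unique)
  qed
  show "SP (pathE n) w s t = mp s t" unfolding SP_def
    using sp u by (rule the_equality)
  show "is_shortest_path (pathE n) w s t (mp s t)" by (rule sp)
qed

lemma valid_path_inst:
  assumes "inj_on c (pathE n)"
  shows "valid_instance n (pathE n) (\<lambda>_. 1) c"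
proof -
  have "\<forall>e\<in>pathE n. e \<subseteq> {..<n} \<and> card e = 2"
  proof
    fix e assume "e \<in> pathE n"
    then obtain j where "e = {j, Suc j}" "Suc j < n" using pathE_elem by blast
    then show "e \<subseteq> {..<n} \<and> card e = 2" by auto
  qed
  moreover have "\<forall>s<n. \<forall>t<n. \<exists>!p. is_shortest_path (pathE n) (\<lambda>_. 1) s t p"
  proof (intro allI impI)
    fix s t assume "s < n" "t < n"
    show "\<exists>!p. is_shortest_path (pathE n) (\<lambda>_. 1) s t p"
    proof (rule ex1I)
      show "is_shortest_path (pathE n) (\<lambda>_. 1) s t (mp s t)" by (rule SP_props(2)[OF \<open>s < n\<close> \<open>t < n\<close>])
    next
      fix p assume "is_shortest_path (pathE n) (\<lambda>_. 1) s t p"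
      then have "is_path (pathE n) s t p" unfolding is_shortest_path_def by simp
      then show "p = mp s t" by (rule is_path_unique)
    qed
  qed
  ultimately show ?thesis using assms unfolding valid_instance_def by simp
qed

lemma bottleneck_eq:
  assumes "e \<in> path_edges (SP E w s t)"
    and "\<forall>e'\<in>path_edges (SP E w s t). e' \<noteq> e \<longrightarrow> c e < c e'"
  shows "bottleneck E w c s t = e"
  unfolding bottleneck_def
proof (rule the_equality)
  show "e \<in> path_edges (SP E w s t) \<and> (\<forall>e'\<in>path_edges (SP E w s t). e' \<noteq> e \<longrightarrow> c e < c e')"
    using assms by blast
next
  fix x assume x: "x \<in> path_edges (SP E w s t) \<and> (\<forall>e'\<in>path_edges (SP E w s t). e' \<noteq> x \<longrightarrow> c x < c e')"
  show "x = e"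
  proof (rule ccontr)
    assume "x \<noteq> e"
    then have "c x < c e" "c e < c x" using x assms by auto
    then show False by simp
  qed
qed

lemma ex_argmin:
  assumes "finite X" "X \<noteq> {}" "inj_on c X"
  shows "\<exists>e\<in>X. \<forall>e'\<in>X. e' \<noteq> e \<longrightarrow> (c e :: real) < c e'"
proof -
  have "Min (c ` X) \<in> c ` X" using assms by (intro Min_in) auto
  then obtain e where e: "e \<in> X" "c e = Min (c ` X)" by auto
  have "\<forall>e'\<in>X. e' \<noteq> e \<longrightarrow> c e < c e'"
  proof (intro ballI impI)
    fix e' assume "e' \<in> X" "e' \<noteq> e"
    then have "c e \<le> c e'" using e assms by simp
    moreover have "c e \<noteq> c e'"
    proof
      assume "c e = c e'"
      then have "e = e'" using inj_onD[OF assms(3)] \<open>e' \<in> X\<close> e(1) by blast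
      then show False using \<open>e' \<noteq> e\<close> by simp
    qed
    ultimately show "c e < c e'" by simp
  qed
  then show ?thesis using e by blast
qed

lemma path_edges_up:
  assumes "s \<le> t"
  shows "path_edges (mp s t) = {{j, Suc j} | j. s \<le> j \<and> j < t}"
proof -
  have m: "mp s t = [s..<Suc t]" using assms by (simp add: mp_def)
  have len: "length (mp s t) - 1 = t - s" using assms by (simp add: m)
  have nth: "\<And>i. i < t - s \<Longrightarrow> {mp s t ! i, mp s t ! Suc i} = {s + i, Suc (s + i)}"
  proof -
    fix i assume i: "i < t - s"
    have "mp s t ! i = s + i" unfolding m using i by (subst nth_upt) auto
    moreover have "mp s t ! Suc i = Suc (s + i)" unfolding m using i by (subst nth_upt) auto
    ultimately show "{mp s t ! i, mp s t ! Suc i} = {s + i, Suc (s + i)}" by simp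
  qed
  have "\<And>x. (\<exists>i. x = {mp s t ! i, mp s t ! Suc i} \<and> i < t - s) = (\<exists>i. x = {s + i, Suc (s + i)} \<and> i < t - s)"
    using nth by blast
  then have "path_edges (mp s t) = {{s + i, Suc (s + i)} | i. i < t - s}"
    unfolding path_edges_def len by simp
  also have "\<dots> = {{j, Suc j} | j. s \<le> j \<and> j < t}"
  proof (intro equalityI subsetI)
    fix e assume "e \<in> {{s + i, Suc (s + i)} | i. i < t - s}"
    then show "e \<in> {{j, Suc j} | j. s \<le> j \<and> j < t}" by auto
  next
    fix e assume "e \<in> {{j, Suc j} | j. s \<le> j \<and> j < t}"
    then obtain j where "e = {j, Suc j}" "s \<le> j" "j < t" by blast
    then show "e \<in> {{s + i, Suc (s + i)} | i. i < t - s}"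
      by (intro CollectI exI[of _ "j - s"]) auto
  qed
  finally show ?thesis .
qed

lemma path_edges_sub: "is_path E s t p \<Longrightarrow> path_edges p \<subseteq> E"
  unfolding is_path_def path_edges_def by auto

lemma finite_path_edges: "finite (path_edges p)"
proof -
  have "path_edges p = (\<lambda>i. {p ! i, p ! Suc i}) ` {..<length p - 1}"
    unfolding path_edges_def by auto
  then show ?thesis by simp
qed

lemma first_edge:
  assumes "is_path E s t p" "s \<noteq> t"
  shows "\<exists>y. {s, y} \<in> path_edges p"
proof -
  have "p \<noteq> []" "hd p = s" "last p = t" using assms(1) by (auto simp: is_path_def)
  then have "length p \<noteq> 1" using assms(2) by (cases p) auto
  then have "0 < length p - 1" using \<open>p \<noteq> []\<close> by (cases p) auto
  moreover have "p ! 0 = s" using \<open>p \<noteq> []\<close> \<open>hd p = s\<close> by (simp add: hd_conv_nth)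
  ultimately show ?thesis unfolding path_edges_def by blast
qed

lemma bn_touched:
  fixes w :: "edge \<Rightarrow> real"
  assumes "s < n" "t < n" "s \<noteq> t" "s \<in> set F"
  defines "PE \<equiv> path_edges (SP (pathE n) w s t)"
  shows "\<exists>B. B \<in> PE \<and> (\<forall>e'\<in>PE. e' \<noteq> B \<longrightarrow> cap n F B < cap n F e') \<and>
     bottleneck (pathE n) w (cap n F) s t = B \<and> touch F B \<and> B \<in> pathE n"
proof -
  have ip: "is_path (pathE n) s t (mp s t)" by (rule is_path_mp[OF assms(1,2)])
  have PE: "PE = path_edges (mp s t)" unfolding PE_def using SP_props(1)[OF assms(1,2)] by simp
  have sub: "PE \<subseteq> pathE n" using PE path_edges_sub[OF ip] by simp
  obtain y where y: "{s, y} \<in> PE" using first_edge[OF ip assms(3)] PE by blast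
  have fin: "finite PE" using PE finite_path_edges by simp
  have inj: "inj_on (cap n F) PE" using inj_cap sub by (rule inj_on_subset)
  obtain B where B: "B \<in> PE" "\<forall>e'\<in>PE. e' \<noteq> B \<longrightarrow> cap n F B < cap n F e'"
    using ex_argmin[OF fin _ inj] y by blast
  have bn: "bottleneck (pathE n) w (cap n F) s t = B"
    using B unfolding PE_def by (rule bottleneck_eq)
  have t1: "touch F {s, y}" using assms(4) by (auto simp: touch_def)
  have "touch F B"
  proof (rule ccontr)
    assume nt: "\<not> touch F B"
    have "B \<noteq> {s, y}"
    proof
      assume "B = {s, y}"
      then show False using t1 nt by simp
    qed
    then have "{s, y} \<noteq> B" by (rule not_sym)
    then have "cap n F B < cap n F {s, y}" by (rule B(2)[rule_format, OF y])
    moreover have "cap n F {s, y} < 0" using t1 by (rule cap_neg)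
    moreover have "cap n F B > 0" using nt by (rule cap_pos)
    ultimately show False by simp
  qed
  then show ?thesis using B bn sub by blast
qed

lemma length_takeWhile_lt: "\<exists>x\<in>set xs. \<not> P x \<Longrightarrow> length (takeWhile P xs) < length xs"
  by (induction xs) auto

lemma takeWhile_touch:
  assumes "touch F e"
  shows "takeWhile (\<lambda>x. x \<notin> e) (F @ ws) = takeWhile (\<lambda>x. x \<notin> e) F"
  using assms unfolding touch_def by (auto intro: takeWhile_append1)

lemma cap_prefix:
  assumes "touch F e"
  shows "cap n (F @ ws) e = cap n F e"
proof -
  have "touch (F @ ws) e" using assms by (auto simp: touch_def)
  then show ?thesis using assms takeWhile_touch[OF assms, of ws]
    by (simp add: cap_def key_def)
qed

lemma cap_later:
  assumes "touch F B" "B \<in> pathE n" "\<not> touch F e"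
  shows "cap n F B < cap n (F @ ws) e"
proof (cases "touch (F @ ws) e")
  case False
  have "cap n F B < 0" by (rule cap_neg[OF assms(1)])
  moreover have "cap n (F @ ws) e > 0" by (rule cap_pos[OF False])
  ultimately show ?thesis by simp
next
  case True
  obtain j where j: "B = {j, Suc j}" "Suc j < n" using pathE_elem[OF assms(2)] by blast
  have lt: "length (takeWhile (\<lambda>x. x \<notin> B) F) < length F"
    using assms(1) unfolding touch_def by (auto intro: length_takeWhile_lt)
  have tw: "takeWhile (\<lambda>x. x \<notin> e) (F @ ws) = F @ takeWhile (\<lambda>x. x \<notin> e) ws"
    using assms(3) unfolding touch_def by (auto intro: takeWhile_append2)
  have "key n F B < length F * (n + 1)"
  proof -
    have "length (takeWhile (\<lambda>x. x \<notin> B) F) + 1 \<le> length F" using lt by simp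
    then have "(length (takeWhile (\<lambda>x. x \<notin> B) F) + 1) * (n + 1) \<le> length F * (n + 1)"
      by (rule mult_right_mono) simp
    then show ?thesis using j unfolding key_def by (simp add: algebra_simps)
  qed
  also have "length F * (n + 1) \<le> key n (F @ ws) e"
    unfolding key_def tw by (simp add: algebra_simps)
  finally have "key n F B < key n (F @ ws) e" .
  then have "real (key n F B) + 1 < real (key n (F @ ws) e) + 1" by simp
  then have "1 / (real (key n (F @ ws) e) + 1) < 1 / (real (key n F B) + 1)"
    by (intro divide_strict_left_mono) auto
  then show ?thesis using True assms(1) by (simp add: cap_def)
qed

lemma stable:
  assumes "v < n"
  shows "observe n (pathE n) w (cap n (vs @ [v] @ ws)) v = observe n (pathE n) w (cap n (vs @ [v])) v"
proof
  fix t
  show "observe n (pathE n) w (cap n (vs @ [v] @ ws)) v t = observe n (pathE n) w (cap n (vs @ [v])) v t"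
  proof (cases "t < n \<and> t \<noteq> v")
    case False
    then show ?thesis by (simp add: observe_def)
  next
    case True
    define F where "F = vs @ [v]"
    define PE where "PE = path_edges (SP (pathE n) w v t)"
    have vF: "v \<in> set F" by (simp add: F_def)
    obtain B where B: "B \<in> PE" "\<forall>e'\<in>PE. e' \<noteq> B \<longrightarrow> cap n F B < cap n F e'"
      "bottleneck (pathE n) w (cap n F) v t = B" "touch F B" "B \<in> pathE n"
      using bn_touched[OF assms _ _ vF, of t w] True unfolding PE_def by blast
    have "\<forall>e'\<in>PE. e' \<noteq> B \<longrightarrow> cap n (F @ ws) B < cap n (F @ ws) e'"
    proof (intro ballI impI)
      fix e' assume e': "e' \<in> PE" "e' \<noteq> B"
      show "cap n (F @ ws) B < cap n (F @ ws) e'"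
      proof (cases "touch F e'")
        case True
        then show ?thesis using B(2) e' cap_prefix[OF True] cap_prefix[OF B(4)] by simp
      next
        case False
        then show ?thesis using cap_later[OF B(4,5) False] cap_prefix[OF B(4)] by simp
      qed
    qed
    then have "bottleneck (pathE n) w (cap n (F @ ws)) v t = B"
      using bottleneck_eq[OF B(1)[unfolded PE_def]] unfolding PE_def by blast
    then show ?thesis using B(3) cap_prefix[OF B(4)] True assms
      by (simp add: observe_def F_def)
  qed
qed

primrec simh :: "algorithm \<Rightarrow> nat \<Rightarrow> nat \<Rightarrow> history" where
  "simh A n 0 = []"
| "simh A n (Suc i) = (case A n (pathE n) (\<lambda>_. 1) (simh A n i) of
      None \<Rightarrow> simh A n i
    | Some v \<Rightarrow> simh A n i @ [(v, observe n (pathE n) (\<lambda>_. 1) (cap n (map fst (simh A n i) @ [v])) v)])"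

lemma sim_prefix: "i \<le> j \<Longrightarrow> \<exists>ys. simh A n j = simh A n i @ ys"
proof (induction j rule: dec_induct)
  case base
  then show ?case by simp
next
  case (step j)
  then obtain ys where ys: "simh A n j = simh A n i @ ys" by blast
  show ?case
  proof (cases "A n (pathE n) (\<lambda>_. 1) (simh A n j)")
    case None
    then show ?thesis using ys by simp
  next
    case (Some v)
    then show ?thesis using ys by simp
  qed
qed

lemma sim_len: "(\<forall>i<N. A n (pathE n) (\<lambda>_. 1) (simh A n i) \<noteq> None) \<Longrightarrow> length (simh A n N) = N"
proof (induction N)
  case 0
  then show ?case by simp
next
  case (Suc N)
  then obtain v where v: "A n (pathE n) (\<lambda>_. 1) (simh A n N) = Some v" by blast
  have "length (simh A n N) = N" using Suc by simp
  then show ?case using v by simp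
qed

lemma observe_big: "\<not> v < n \<Longrightarrow> observe n E w c v = observe n E w c' v"
  by (simp add: observe_def)

lemma run_sim:
  "i \<le> N \<Longrightarrow> run A n (pathE n) (\<lambda>_. 1) (cap n (map fst (simh A n N))) i = simh A n i"
proof (induction i)
  case 0
  then show ?case by simp
next
  case (Suc i)
  then have ih: "run A n (pathE n) (\<lambda>_. 1) (cap n (map fst (simh A n N))) i = simh A n i" by simp
  show ?case
  proof (cases "A n (pathE n) (\<lambda>_. 1) (simh A n i)")
    case None
    then show ?thesis using ih by simp
  next
    case (Some v)
    obtain ys where ys: "simh A n N = simh A n (Suc i) @ ys" using sim_prefix[OF Suc.prems] by blast
    have F: "map fst (simh A n N) = map fst (simh A n i) @ [v] @ map fst ys"
      using ys Some by simp
    have "observe n (pathE n) (\<lambda>_. 1) (cap n (map fst (simh A n N))) v =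
          observe n (pathE n) (\<lambda>_. 1) (cap n (map fst (simh A n i) @ [v])) v"
    proof (cases "v < n")
      case True
      then show ?thesis unfolding F by (rule stable)
    next
      case False
      then show ?thesis by (rule observe_big)
    qed
    then show ?thesis using ih Some by simp
  qed
qed

lemma run_stuck:
  assumes "A n E w (run A n E w c i) = None" "i \<le> m"
  shows "run A n E w c m = run A n E w c i"
  using assms(2)
proof (induction m rule: dec_induct)
  case base
  then show ?case by simp
next
  case (step m)
  then show ?case using assms(1) by simp
qed

lemma card_touch: "card {e \<in> pathE n. touch F e} \<le> 2 * card (set F)"
proof -
  have sub: "{e \<in> pathE n. touch F e} \<subseteq> (\<Union>x\<in>set F. {{x - 1, x}, {x, Suc x}})"
  proof
    fix e assume e: "e \<in> {e \<in> pathE n. touch F e}"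
    then obtain j where j: "e = {j, Suc j}" using pathE_elem by blast
    obtain x where x: "x \<in> set F" "x \<in> e" using e unfolding touch_def by blast
    have "x = j \<or> x = Suc j" using x j by auto
    then have "e \<in> {{x - 1, x}, {x, Suc x}}" using j by auto
    then show "e \<in> (\<Union>x\<in>set F. {{x - 1, x}, {x, Suc x}})" using x by blast
  qed
  have "card (\<Union>x\<in>set F. {{x - 1, x}, {x, Suc x}}) \<le> (\<Sum>x\<in>set F. card {{x - 1, x}, {x, Suc x}})"
    by (rule card_UN_le) simp
  also have "\<dots> \<le> (\<Sum>x\<in>set F. 2)"
  proof (rule sum_mono)
    fix x show "card {{x - 1, x}, {x, Suc x}} \<le> 2" by (cases "{x - 1, x} = {x, Suc x}") (simp_all add: card_insert_if)
  qed
  also have "\<dots> = 2 * card (set F)" by simp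
  finally show ?thesis using card_mono[OF _ sub] by (meson finite_UN_I finite_insert finite.emptyI finite_set le_trans)
qed

lemma div_block: "b * g \<le> x \<Longrightarrow> x < b * g + g \<Longrightarrow> x div g = (b::nat)"
  by (rule div_nat_eqI) (auto simp: algebra_simps)

lemma inv_lt: "(y::real) < x \<Longrightarrow> 0 \<le> y \<Longrightarrow> 1 / (x + 1) < 1 / (y + 1)"
  by (rule divide_strict_left_mono) (auto intro: mult_pos_pos)

lemma finite_pathE: "finite (pathE n)"
proof -
  have "pathE n \<subseteq> (\<lambda>j. {j, Suc j}) ` {..<n}" unfolding pathE_def by auto
  then show ?thesis by (rule finite_subset) simp
qed

lemma finite_revealed: "finite S \<Longrightarrow> finite (revealed n E w c S)"
  unfolding revealed_def revealed_by_def by auto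

lemma opt_lower:
  fixes w :: "edge \<Rightarrow> real"
  assumes g: "g \<ge> 2" and Mg: "M * g \<le> n"
    and Tb: "Tb \<subseteq> {b. b < M \<and> (\<forall>x\<in>set F. x div g \<noteq> b)}" "card Tb = k" "finite Tb"
  shows "k * (g - 1) \<le> OPT n (pathE n) w (cap n F) k"
proof -
  define T where "T = (\<lambda>b. b * g) ` Tb"
  define f where "f = (\<lambda>(b, r). {b * g + r, Suc (b * g + r)})"
  define Q where "Q = f ` (Tb \<times> {..<g - 1})"
  have injf: "inj_on f (Tb \<times> {..<g - 1})"
  proof (rule inj_onI)
    fix p q assume p: "p \<in> Tb \<times> {..<g - 1}" and q: "q \<in> Tb \<times> {..<g - 1}" and eq: "f p = f q"
    obtain b r where br: "p = (b, r)" "r < g - 1" using p by auto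
    obtain b' r' where br': "q = (b', r')" "r' < g - 1" using q by auto
    have "Min (f p) = Min (f q)" using eq by simp
    then have e: "b * g + r = b' * g + r'" using br br' by (simp add: f_def)
    have "(b * g + r) div g = b" using br g by (intro div_block) auto
    moreover have "(b' * g + r') div g = b'" using br' g by (intro div_block) auto
    ultimately have "b = b'" using e by simp
    then have "r = r'" using e by simp
    then show "p = q" using br br' \<open>b = b'\<close> by simp
  qed
  have cardQ: "card Q = k * (g - 1)"
    unfolding Q_def using card_image[OF injf] Tb(2) by (simp add: card_cartesian_product)
  have QR: "Q \<subseteq> revealed n (pathE n) w (cap n F) T"
  proof
    fix e assume "e \<in> Q"
    then obtain b r where b: "b \<in> Tb" and r: "r < g - 1" and e: "e = {b * g + r, Suc (b * g + r)}"
      unfolding Q_def f_def by auto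
    define a0 where "a0 = b * g"
    define t where "t = Suc (b * g + r)"
    have bM: "b < M" and clean: "\<forall>x\<in>set F. x div g \<noteq> b" using b Tb(1) by auto
    have "(b + 1) * g \<le> M * g" using bM by (intro mult_right_mono) auto
    then have tn: "t < n" using Mg r unfolding t_def by (simp add: algebra_simps)
    have a0t: "a0 < t" unfolding a0_def t_def by simp
    then have a0n: "a0 < n" using tn by simp
    have PE: "path_edges (SP (pathE n) w a0 t) = {{j, Suc j} | j. a0 \<le> j \<and> j < t}"
      using SP_props(1)[OF a0n tn] path_edges_up[of a0 t] a0t by simp
    have free: "\<And>j. a0 \<le> j \<Longrightarrow> j < t \<Longrightarrow> cap n F {j, Suc j} = 1 / (real j + 1)"
    proof -
      fix j assume j: "a0 \<le> j" "j < t"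
      have "j div g = b" using j r g unfolding a0_def t_def by (intro div_block) auto
      moreover have "Suc j div g = b" using j r g unfolding a0_def t_def by (intro div_block) auto
      ultimately have "\<not> touch F {j, Suc j}" using clean unfolding touch_def by auto
      then show "cap n F {j, Suc j} = 1 / (real j + 1)" by (simp add: cap_def)
    qed
    have "bottleneck (pathE n) w (cap n F) a0 t = e"
    proof (rule bottleneck_eq)
      show "e \<in> path_edges (SP (pathE n) w a0 t)" unfolding PE unfolding e a0_def t_def by auto
      show "\<forall>e'\<in>path_edges (SP (pathE n) w a0 t). e' \<noteq> e \<longrightarrow> cap n F e < cap n F e'"
      proof (intro ballI impI)
        fix e' assume e': "e' \<in> path_edges (SP (pathE n) w a0 t)" "e' \<noteq> e"
        then obtain j where j: "e' = {j, Suc j}" "a0 \<le> j" "j < t" unfolding PE by blast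
        have "j \<noteq> b * g + r" using j e' e by auto
        then have jl: "j < b * g + r" using j unfolding t_def by simp
        have ce: "cap n F e = 1 / (real (b * g + r) + 1)"
          unfolding e by (rule free) (auto simp: a0_def t_def)
        have "real j < real (b * g + r)" using jl by (simp only: of_nat_less_iff)
        then have "1 / (real (b * g + r) + 1) < 1 / (real j + 1)"
          by (rule inv_lt) simp
        then show "cap n F e < cap n F e'" using ce free[OF j(2,3)] j(1) by simp
      qed
    qed
    moreover have "t \<noteq> a0" using a0t by simp
    ultimately have "e \<in> revealed_by n (pathE n) w (cap n F) a0"
      unfolding revealed_by_def using a0n tn by auto
    moreover have "a0 \<in> T" unfolding T_def a0_def using b by (rule imageI)
    ultimately show "e \<in> revealed n (pathE n) w (cap n F) T" unfolding revealed_def by blast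
  qed
  have finT: "finite T" unfolding T_def using Tb(3) by simp
  have "card Q \<le> card (revealed n (pathE n) w (cap n F) T)"
    by (rule card_mono[OF finite_revealed[OF finT] QR])
  moreover have "card (revealed n (pathE n) w (cap n F) T) \<le> OPT n (pathE n) w (cap n F) k"
  proof -
    have fin: "finite {S. S \<subseteq> {..<n} \<and> card S \<le> k}"
      by (rule finite_subset[of _ "Pow {..<n}"]) auto
    have Tsub: "T \<subseteq> {..<n}"
    proof
      fix x assume "x \<in> T"
      then obtain b where b: "b \<in> Tb" "x = b * g" unfolding T_def by auto
      have "b < M" using b Tb(1) by auto
      then have "(b + 1) * g \<le> M * g" by (intro mult_right_mono) auto
      then show "x \<in> {..<n}" using b Mg g by (simp add: algebra_simps)
    qed
    have "card T \<le> k" unfolding T_def using card_image_le[OF Tb(3)] Tb(2) by simp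
    then have "T \<in> {S. S \<subseteq> {..<n} \<and> card S \<le> k}" using Tsub by simp
    then show ?thesis unfolding OPT_def
      by (intro Max_ge finite_imageI fin imageI)
  qed
  ultimately show ?thesis using cardQ by simp
qed

lemma main_bound:
  assumes k: "k \<ge> 1" and IO: "instance_optimal A n k \<alpha> \<beta>"
  shows "real n \<le> 16 * \<alpha>^2 * \<beta> * real k"
proof -
  have a1: "\<alpha> \<ge> 1" and b1: "\<beta> \<ge> 1" using IO unfolding instance_optimal_def by auto
  define a where "a = nat \<lceil>\<alpha>\<rceil>"
  have aa: "\<alpha> \<le> real a" unfolding a_def using a1 by linarith
  have aa2: "real a \<le> 2 * \<alpha>" unfolding a_def using a1 by linarith
  have a_pos: "a \<ge> 1" using aa a1 by linarith
  define D where "D = 2 * a * k"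
  have D_pos: "D \<ge> 2" unfolding D_def using a_pos k
    by (metis mult_le_mono nat_mult_1 mult_2 add_mono numeral_le_iff one_le_numeral nat_mult_1_right)
  define g where "g = n div D"
  have nD: "n < (g + 1) * D"
  proof -
    have "n = g * D + n mod D" unfolding g_def by simp
    moreover have "n mod D < D" using D_pos by simp
    ultimately show ?thesis by (simp add: algebra_simps)
  qed
  have ak: "real a * real k \<le> 2 * \<alpha> * real k" using aa2 k by (intro mult_right_mono) auto
  have al2: "\<alpha> \<le> \<alpha>^2 * \<beta>"
  proof -
    have "\<alpha> \<le> \<alpha> * \<alpha>" using a1 by simp
    also have "\<dots> \<le> \<alpha> * \<alpha> * \<beta>" using a1 b1 by simp
    finally show ?thesis by (simp add: power2_eq_square)
  qed
  show ?thesis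
  proof (cases "g \<le> 1")
    case True
    then have "n < 2 * D" using nD by (metis add_le_mono1 le_less_trans less_le_trans mult_le_mono1 one_add_one nat_less_le)
    then have "real n < 2 * real D" by linarith
    also have "\<dots> = 4 * (real a * real k)" unfolding D_def by simp
    also have "\<dots> \<le> 8 * \<alpha> * real k" using ak by simp
    also have "\<dots> \<le> 16 * \<alpha>^2 * \<beta> * real k"
    proof -
      have "8 * \<alpha> \<le> 16 * \<alpha>^2 * \<beta>" using al2 a1 by linarith
      then show ?thesis by (rule mult_right_mono) simp
    qed
    finally show ?thesis by simp
  next
    case False
    then have g2: "g \<ge> 2" by simp
    define N where "N = a * k + 1"
    define F where "F = map fst (simh A n N)"
    define c where "c = cap n F"
    define E where "E = pathE n"
    define w :: "edge \<Rightarrow> real" where "w = (\<lambda>_. 1)"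
    have valid: "valid_instance n E w c"
      unfolding E_def w_def c_def by (rule valid_path_inst[OF inj_cap])
    have L: "\<forall>i. real (length (run A n E w c i)) \<le> \<alpha> * real k"
      and R: "real (card (revealed n E w c (selected A n E w c))) \<ge> real (OPT n E w c k) / \<beta>"
      using IO valid unfolding instance_optimal_def by blast+
    have runsim: "\<And>i. i \<le> N \<Longrightarrow> run A n E w c i = simh A n i"
      unfolding E_def w_def c_def F_def by (rule run_sim)
    have lenF: "real (length F) \<le> \<alpha> * real k"
      using L[rule_format, of N] runsim[of N] unfolding F_def by simp
    have lenF2: "length F \<le> a * k"
    proof -
      have "\<alpha> * real k \<le> real a * real k" using aa by (intro mult_right_mono) auto
      then show ?thesis using lenF by (simp del: of_nat_mult add: of_nat_mult[symmetric])
    qed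
    have "\<not> (\<forall>i<N. A n (pathE n) (\<lambda>_. 1) (simh A n i) \<noteq> None)"
    proof
      assume "\<forall>i<N. A n (pathE n) (\<lambda>_. 1) (simh A n i) \<noteq> None"
      then have "length (simh A n N) = N" by (rule sim_len)
      then show False using lenF2 unfolding F_def N_def by simp
    qed
    then obtain i0 where i0: "i0 < N" "A n E w (simh A n i0) = None"
      unfolding E_def w_def by blast
    have stuck: "A n E w (run A n E w c i0) = None" using i0 runsim[of i0] by simp
    have sel: "selected A n E w c \<subseteq> set F"
    proof
      fix s assume "s \<in> selected A n E w c"
      then obtain m where m: "s \<in> fst ` set (run A n E w c m)" unfolding selected_def by blast
      have "\<exists>m'. m' \<le> N \<and> run A n E w c m = simh A n m'"
      proof (cases "m \<le> N")
        case True then show ?thesis using runsim by blast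
      next
        case False
        then have "run A n E w c m = run A n E w c i0" using stuck i0 by (intro run_stuck) auto
        moreover have "i0 \<le> N" using i0 by simp
        ultimately show ?thesis using runsim[of i0] by auto
      qed
      then obtain m' where m': "m' \<le> N" "run A n E w c m = simh A n m'" by blast
      obtain ys where "simh A n N = simh A n m' @ ys" using sim_prefix[OF m'(1)] by blast
      then show "s \<in> set F" using m m'(2) unfolding F_def by auto
    qed
    have revsub: "revealed n E w c (selected A n E w c) \<subseteq> {e \<in> pathE n. touch F e}"
    proof
      fix e assume "e \<in> revealed n E w c (selected A n E w c)"
      then obtain s where s: "s \<in> selected A n E w c" "e \<in> revealed_by n E w c s"
        unfolding revealed_def by blast
      have sn: "s < n" using s(2) unfolding revealed_by_def by (auto split: if_splits)
      then obtain t where t: "t < n" "t \<noteq> s" "e = bottleneck E w c s t"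
        using s(2) unfolding revealed_by_def by auto
      have "s \<in> set F" using s(1) sel by blast
      then show "e \<in> {e \<in> pathE n. touch F e}"
        using bn_touched[OF sn t(1) t(2)[symmetric], of F w] t(3) unfolding E_def c_def by auto
    qed
    have finT: "finite {e \<in> pathE n. touch F e}" using finite_pathE by simp
    have "card (revealed n E w c (selected A n E w c)) \<le> 2 * card (set F)"
      using card_mono[OF finT revsub] card_touch[of n F] by linarith
    also have "\<dots> \<le> 2 * length F" using card_length[of F] by simp
    finally have revb: "real (card (revealed n E w c (selected A n E w c))) \<le> 2 * (\<alpha> * real k)"
      using lenF by linarith
    define M where "M = n div g"
    have Mg: "M * g \<le> n" unfolding M_def by simp
    have DM: "D \<le> M"
    proof -
      have "g * D \<le> n" unfolding g_def by (simp add: mult.commute)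
      then have "(D * g) div g \<le> n div g" by (intro div_le_mono) (simp add: mult.commute)
      then show ?thesis unfolding M_def using g2 by simp
    qed
    define Cl where "Cl = {b. b < M \<and> (\<forall>x\<in>set F. x div g \<noteq> b)}"
    have "{..<M} \<subseteq> Cl \<union> (\<lambda>x. x div g) ` set F" unfolding Cl_def by auto
    then have "card {..<M} \<le> card (Cl \<union> (\<lambda>x. x div g) ` set F)"
      by (rule card_mono[rotated]) (auto simp: Cl_def)
    also have "\<dots> \<le> card Cl + card ((\<lambda>x. x div g) ` set F)" by (rule card_Un_le)
    also have "\<dots> \<le> card Cl + card (set F)" using card_image_le[of "set F"] by simp
    finally have "M \<le> card Cl + card (set F)" by simp
    moreover have "card (set F) \<le> a * k" using card_length[of F] lenF2 by linarith
    moreover have "k \<le> a * k" using a_pos by simp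
    moreover have "D = 2 * (a * k)" unfolding D_def by simp
    ultimately have "k \<le> card Cl" using DM by linarith
    then obtain Tb where Tb: "Tb \<subseteq> Cl" "card Tb = k" "finite Tb"
      by (rule obtain_subset_with_card_n)
    have opt: "k * (g - 1) \<le> OPT n E w c k"
      unfolding E_def c_def by (rule opt_lower[OF g2 Mg Tb(1)[unfolded Cl_def] Tb(2,3)])
    have "real (k * (g - 1)) / \<beta> \<le> real (OPT n E w c k) / \<beta>"
    proof (rule divide_right_mono)
      show "real (k * (g - 1)) \<le> real (OPT n E w c k)" using opt by (simp only: of_nat_le_iff)
    qed (use b1 in simp)
    also have "\<dots> \<le> 2 * (\<alpha> * real k)" using R revb by linarith
    finally have "real k * real (g - 1) \<le> 2 * \<alpha> * real k * \<beta>"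
      using b1 by (simp add: field_simps)
    then have "real (g - 1) \<le> 2 * \<alpha> * \<beta>" using k by (simp add: field_simps)
    then have gb: "real g + 1 \<le> 4 * \<alpha> * \<beta>"
    proof -
      assume h: "real (g - 1) \<le> 2 * \<alpha> * \<beta>"
      have "real (g - 1) = real g - 1" using g2 by simp
      moreover have "1 \<le> \<alpha> * \<beta>" using a1 b1 by (metis mult_mono' one_le_numeral mult_1 zero_le_one)
      ultimately show ?thesis using h by linarith
    qed
    have "real n < real ((g + 1) * D)" using nD by (simp only: of_nat_less_iff)
    also have "\<dots> = (real g + 1) * real D" by (simp add: algebra_simps)
    also have "\<dots> = (real g + 1) * (2 * (real a * real k))" unfolding D_def by simp
    also have "\<dots> \<le> (4 * \<alpha> * \<beta>) * (2 * (2 * \<alpha> * real k))"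
      using gb ak aa2 a1 by (intro mult_mono) auto
    also have "\<dots> = 16 * \<alpha>^2 * \<beta> * real k" by (simp add: power2_eq_square)
    finally show ?thesis by simp
  qed
qed

theorem mainTheorem5:
  shows "\<exists>C>0. \<forall>(A::algorithm) n k \<alpha> \<beta>. k \<ge> 1 \<longrightarrow> instance_optimal A n k \<alpha> \<beta> \<longrightarrow>
           \<alpha>^2 * \<beta> \<ge> C * real n / real k"
proof (intro exI[of _ "1/16"] conjI allI impI)
  show "(0::real) < 1/16" by simp
next
  fix A n k \<alpha> \<beta>
  assume k: "(k::nat) \<ge> 1" and IO: "instance_optimal A n k \<alpha> \<beta>"
  have "real n \<le> 16 * \<alpha>^2 * \<beta> * real k" by (rule main_bound[OF k IO])
  then show "1/16 * real n / real k \<le> \<alpha>^2 * \<beta>" using k by (simp add: field_simps)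
qed

end
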